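(* Let $d\ge 1$ and $n\ge 1$ be integers, let $R=\mathbb{Q}[a_{i,j}:1\le i,j\le n]$, and fix $i,j,l\in\{1,\dots,n\}$ (not necessarily distinct). Then \[ z(\mathrm{fern}_{d,n},\mu(i,j,l))=(B^n)_{i,j}, \] where $B$ is the $n\times n$ matrix over $R$ with entries $B_{u,v}=a_{u,v}\,a_{u,l}^{\,d-1}$.
   Context: $\mathrm{fern}_{d,n}$ is the rooted plane tree with a path $v_0,v_1,\dots,v_n$ where $v_0$ is the root, each of $v_0,\dots,v_{n-1}$ has exactly $d$ children of which the leftmost is $v_{k+1}$ and the other $d-1$ are leaves, and $v_n$ is a leaf (so it has $n$ vertices with $d$ children, each such vertex has at most one non-leaf child, and that child is leftmost). A labeling of a rooted plane tree $T$ is a map $\lambda\colon V(T)\to\{1,\dots,n\}$; for an edge $e$ from parent $v$ to child $u$ put $w(e,\lambda)=a_{\lambda(v),\lambda(u)}$ and $w(T,\lambda)=\prod_{e}w(e,\lambda)$. A root-leaf labeling is a map $\mu$ from the set consisting of the root and the leaves of $T$ to $\{1,\dots,n\}$, and $z(T,\mu)=\sum_{\lambda}w(T,\lambda)$, the sum over all labelings $\lambda$ of $T$ agreeing with $\mu$ on the root and leaves. $\mu(i,j,l)$ is the root-leaf labeling of $\mathrm{fern}_{d,n}$ that labels the root $i$, the leaf $v_n$ by $j$, and every other leaf by $l$. *)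

theory Defs
  imports "HOL-Library.FuncSet" "Jordan_Normal_Form.Matrix"
begin

datatype ptree = Node "ptree list"

text \<open>Vertices are addressed by positions (paths of child indices from the root,
  children numbered 0,1,... from left to right). The root is the empty position.\<close>
fun subtree :: "ptree \<Rightarrow> nat list \<Rightarrow> ptree option" where
  "subtree t [] = Some t"
| "subtree (Node ts) (i # p) = (if i < length ts then subtree (ts ! i) p else None)"

definition vertices :: "ptree \<Rightarrow> nat list set" where
  "vertices t = {p. subtree t p \<noteq> None}"

definition children :: "ptree \<Rightarrow> ptree list" where
  "children t = (case t of Node ts \<Rightarrow> ts)"

definition leaves :: "ptree \<Rightarrow> nat list set" where
  "leaves t = {p \<in> vertices t. children (the (subtree t p)) = []}"

text \<open>Edges: from parent position p to child position p @ [k]; so every non-root vertex q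
  is the child end of exactly one edge, whose parent end is butlast q.\<close>
definition root_leaves :: "ptree \<Rightarrow> nat list set" where
  "root_leaves t = insert [] (leaves t)"

definition labelings :: "nat \<Rightarrow> ptree \<Rightarrow> (nat list \<Rightarrow> nat) set" where
  "labelings n t = vertices t \<rightarrow>\<^sub>E {1..n}"

definition tree_weight :: "(nat \<Rightarrow> nat \<Rightarrow> 'a::comm_ring_1) \<Rightarrow> ptree \<Rightarrow> (nat list \<Rightarrow> nat) \<Rightarrow> 'a" where
  "tree_weight a t lam = (\<Prod>q \<in> vertices t - {[]}. a (lam (butlast q)) (lam q))"

definition zval :: "(nat \<Rightarrow> nat \<Rightarrow> 'a::comm_ring_1) \<Rightarrow> nat \<Rightarrow> ptree \<Rightarrow> (nat list \<Rightarrow> nat) \<Rightarrow> 'a" where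
  "zval a n t mu = (\<Sum>lam \<in> {lam \<in> labelings n t. \<forall>p \<in> root_leaves t. lam p = mu p}. tree_weight a t lam)"

fun fern :: "nat \<Rightarrow> nat \<Rightarrow> ptree" where
  "fern d 0 = Node []"
| "fern d (Suc k) = Node (fern d k # replicate (d - 1) (Node []))"

definition fern_mu :: "nat \<Rightarrow> nat \<Rightarrow> nat \<Rightarrow> nat \<Rightarrow> nat list \<Rightarrow> nat" where
  "fern_mu n i j l p = (if p = [] then i else if p = replicate n 0 then j else l)"

end

theory Submission
  imports Defs
begin

lemma vertices_Node: "vertices (Node ts) = insert [] {c#p | c p. c < length ts \<and> p \<in> vertices (ts!c)}"
  unfolding vertices_def
  apply (rule Set.set_eqI)
  subgoal for x by (cases x) (auto split: if_splits)
  done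

lemma leaves_Node: "leaves (Node ts) = (if ts = [] then {[]} else {c#p | c p. c < length ts \<and> p \<in> leaves (ts!c)})"
  unfolding leaves_def vertices_def
  apply (rule Set.set_eqI)
  subgoal for x by (cases x) (auto split: if_splits simp: children_def)
  done

lemma finite_vertices: "finite (vertices t)"
proof (induction t)
  case (Node ts)
  have "{c#p | c p. c < length ts \<and> p \<in> vertices (ts!c)} = (\<Union>c<length ts. (Cons c) ` vertices (ts!c))" by auto
  moreover have "finite (\<Union>c<length ts. (Cons c) ` vertices (ts!c))"
    using Node by (auto simp: nth_mem)
  ultimately show ?case by (simp add: vertices_Node)
qed

lemma root_vertex: "[] \<in> vertices t" by (simp add: vertices_def)

lemma leaves_sub: "leaves t \<subseteq> vertices t" by (auto simp: leaves_def)

lemma vertices_leaf: "vertices (Node []) = {[]}" by (simp add: vertices_Node)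
lemma leaves_leaf: "leaves (Node []) = {[]}" by (simp add: leaves_Node)

lemma vertices_fern_Suc: "vertices (fern d (Suc k)) = insert [] ((Cons 0) ` vertices (fern d k) \<union> {[c] | c. 1 \<le> c \<and> c < d})"
  apply (simp add: vertices_Node[of "fern d k # _"])
  apply (rule Set.set_eqI)
  apply (auto simp: nth_Cons' vertices_leaf split: if_splits)
  done

lemma leaves_fern_Suc: "leaves (fern d (Suc k)) = (Cons 0) ` leaves (fern d k) \<union> {[c] | c. 1 \<le> c \<and> c < d}"
  apply (simp add: leaves_Node[of "fern d k # _"])
  apply (rule Set.set_eqI)
  apply (auto simp: nth_Cons' leaves_leaf split: if_splits)
  done


lemma vertices_prefix: "p @ r \<in> vertices t \<Longrightarrow> p \<in> vertices t"
proof (induction p arbitrary: t)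
  case Nil then show ?case by (simp add: root_vertex)
next
  case (Cons c p)
  obtain ts where t: "t = Node ts" by (cases t)
  from Cons.prems show ?case unfolding t using Cons.IH by (auto simp: vertices_Node)
qed

lemma vertices_butlast: "q \<in> vertices t \<Longrightarrow> butlast q \<in> vertices t"
  using vertices_prefix[of "butlast q" "[last q]" t]
  by (cases "q = []") auto

definition fmu :: "nat \<Rightarrow> nat \<Rightarrow> nat \<Rightarrow> nat list \<Rightarrow> nat" where
  "fmu k j l p = (if p = replicate k 0 then j else l)"

definition AS :: "nat \<Rightarrow> nat \<Rightarrow> nat \<Rightarrow> nat \<Rightarrow> nat \<Rightarrow> nat \<Rightarrow> (nat list \<Rightarrow> nat) set" where
  "AS N d k i j l = {lam \<in> labelings N (fern d k). lam [] = i \<and> (\<forall>p\<in>leaves (fern d k). lam p = fmu k j l p)}"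

definition Z :: "(nat \<Rightarrow> nat \<Rightarrow> 'a::comm_ring_1) \<Rightarrow> nat \<Rightarrow> nat \<Rightarrow> nat \<Rightarrow> nat \<Rightarrow> nat \<Rightarrow> nat \<Rightarrow> 'a" where
  "Z a N d k i j l = sum (tree_weight a (fern d k)) (AS N d k i j l)"

lemma finite_AS: "finite (AS N d k i j l)"
proof -
  have "finite (labelings N (fern d k))" unfolding labelings_def
    by (intro finite_PiE finite_vertices) auto
  then show ?thesis unfolding AS_def by simp
qed

lemma Z0: "Z a N d 0 i j l = (if i = j \<and> i \<in> {1..N} then 1 else 0)"
proof -
  have V: "vertices (fern d 0) = {[]}" "leaves (fern d 0) = {[]}"
    by (simp_all add: vertices_leaf leaves_leaf)
  have tw: "tree_weight a (fern d 0) lam = 1" for lam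
    unfolding tree_weight_def V by simp
  show ?thesis
  proof (cases "i = j \<and> i \<in> {1..N}")
    case True
    have "AS N d 0 i j l = {\<lambda>p. if p = [] then i else undefined}"
      using True unfolding AS_def labelings_def V fmu_def
      by (auto simp: PiE_def extensional_def fun_eq_iff)
    then show ?thesis using True tw[simplified] unfolding Z_def by simp
  next
    case False
    have "AS N d 0 i j l = {}"
      using False unfolding AS_def labelings_def V fmu_def
      by (auto simp: PiE_def)
    then show ?thesis using False unfolding Z_def by simp
  qed
qed


lemma ZSuc:
  assumes i: "i \<in> {1..N}" and l: "l \<in> {1..N}"
  shows "Z a N d (Suc k) i j l = (\<Sum>u\<in>{1..N}. a i u * a i l ^ (d - 1) * Z a N d k u j l)"
proof -
  define V where "V = vertices (fern d k)"
  define L where "L = leaves (fern d k)"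
  define W where "W = {[c] | c. 1 \<le> c \<and> c < d}"
  have V': "vertices (fern d (Suc k)) = insert [] ((Cons 0) ` V \<union> W)"
    unfolding V_def W_def by (rule vertices_fern_Suc)
  have L': "leaves (fern d (Suc k)) = (Cons 0) ` L \<union> W"
    unfolding L_def W_def by (rule leaves_fern_Suc)
  have LV: "L \<subseteq> V" unfolding L_def V_def by (rule leaves_sub)
  have rV: "[] \<in> V" unfolding V_def by (rule root_vertex)
  have fV: "finite V" unfolding V_def by (rule finite_vertices)
  have blV: "butlast q \<in> V" if "q \<in> V" for q using that unfolding V_def by (rule vertices_butlast)
  have W0: "p \<in> W \<Longrightarrow> hd p \<noteq> 0 \<and> p \<noteq> [] \<and> tl p = []" for p unfolding W_def by auto
  have Wfmu: "p \<in> W \<Longrightarrow> fmu (Suc k) j l p = l" for p unfolding W_def fmu_def by auto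
  have Cfmu: "fmu (Suc k) j l (0 # q) = fmu k j l q" for q unfolding fmu_def by auto
  define S where "S = AS N d (Suc k) i j l"
  define T where "T = Sigma {1..N} (\<lambda>u. AS N d k u j l)"
  define phi where "phi = (\<lambda>lam :: nat list \<Rightarrow> nat. (lam [0], restrict (\<lambda>q. lam (0#q)) V))"
  define psi where "psi = (\<lambda>(u::nat, m :: nat list \<Rightarrow> nat). (\<lambda>p. if p = [] then i else if p \<in> (Cons 0) ` V then m (tl p) else if p \<in> W then l else undefined))"
  define h where "h = (\<lambda>(u::nat, m). a i u * a i l ^ (d - 1) * tree_weight a (fern d k) m)"
  have S_iff: "lam \<in> S \<longleftrightarrow> lam \<in> insert [] ((Cons 0) ` V \<union> W) \<rightarrow>\<^sub>E {1..N} \<and> lam [] = i \<and>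
     (\<forall>q\<in>L. lam (0#q) = fmu k j l q) \<and> (\<forall>p\<in>W. lam p = l)" for lam
    unfolding S_def AS_def labelings_def V' L' using Wfmu Cfmu by auto
  have T_iff: "(u, m) \<in> T \<longleftrightarrow> u \<in> {1..N} \<and> m \<in> V \<rightarrow>\<^sub>E {1..N} \<and> m [] = u \<and> (\<forall>q\<in>L. m q = fmu k j l q)" for u m
    unfolding T_def AS_def labelings_def V_def L_def by auto
  have "sum (tree_weight a (fern d (Suc k))) S = sum h T"
  proof (rule sum.reindex_bij_witness[where i = psi and j = phi])
    fix lam assume "lam \<in> S"
    then have lam: "lam \<in> insert [] ((Cons 0) ` V \<union> W) \<rightarrow>\<^sub>E {1..N}" "lam [] = i"
      "\<forall>q\<in>L. lam (0#q) = fmu k j l q" "\<forall>p\<in>W. lam p = l" using S_iff by auto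
    show "psi (phi lam) = lam"
    proof
      fix p
      show "psi (phi lam) p = lam p"
        using lam(1) lam(2) lam(4) unfolding psi_def phi_def
        by (auto simp: PiE_def extensional_def)
    qed
    have "lam [0] \<in> {1..N}" using lam(1) rV by auto
    moreover have "restrict (\<lambda>q. lam (0#q)) V \<in> V \<rightarrow>\<^sub>E {1..N}" using lam(1) by auto
    moreover have "restrict (\<lambda>q. lam (0#q)) V [] = lam [0]" using rV by simp
    moreover have "\<forall>q\<in>L. restrict (\<lambda>q. lam (0#q)) V q = fmu k j l q" using lam(3) LV by auto
    ultimately show "phi lam \<in> T" unfolding phi_def using T_iff by blast
    have tw: "tree_weight a (fern d (Suc k)) lam =
       a i (lam [0]) * a i l ^ (d - 1) * tree_weight a (fern d k) (restrict (\<lambda>q. lam (0#q)) V)"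
    proof -
      have e1: "vertices (fern d (Suc k)) - {[]} = (Cons 0) ` V \<union> W" using V' W0 by auto
      have d1: "(Cons 0) ` V \<inter> W = {}" using W0 by force
      have fW: "finite W" unfolding W_def
        by (rule finite_subset[of _ "(\<lambda>c. [c]) ` {1..<d}"]) auto
      have pW: "(\<Prod>q\<in>W. a (lam (butlast q)) (lam q)) = a i l ^ (d - 1)"
      proof -
        have "W = (\<lambda>c. [c]) ` {1..<d}" unfolding W_def by auto
        then have "(\<Prod>q\<in>W. a (lam (butlast q)) (lam q)) = (\<Prod>c\<in>{1..<d}. a (lam []) (lam [c]))"
          by (simp add: prod.reindex inj_on_def)
        also have "\<dots> = (\<Prod>c\<in>{1..<d}. a i l)"
          using lam(2) lam(4) unfolding W_def by (intro prod.cong) auto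
        finally show ?thesis by simp
      qed
      have pV: "(\<Prod>q\<in>(Cons 0) ` V. a (lam (butlast q)) (lam q)) = (\<Prod>q\<in>V. a (lam (butlast (0#q))) (lam (0#q)))"
        by (simp add: prod.reindex)
      also have "\<dots> = a (lam []) (lam [0]) * (\<Prod>q\<in>V - {[]}. a (lam (butlast (0#q))) (lam (0#q)))"
        using fV rV by (simp add: prod.remove)
      also have "(\<Prod>q\<in>V - {[]}. a (lam (butlast (0#q))) (lam (0#q))) =
          tree_weight a (fern d k) (restrict (\<lambda>q. lam (0#q)) V)"
        unfolding tree_weight_def V_def[symmetric]
        using blV by (intro prod.cong) auto
      finally show ?thesis
        unfolding tree_weight_def e1 using d1 fW fV pW lam(2)
        by (simp add: prod.union_disjoint)
    qed
    show "h (phi lam) = tree_weight a (fern d (Suc k)) lam"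
      unfolding tw h_def phi_def by simp
  next
    fix um assume "um \<in> T"
    then obtain u m where um: "um = (u, m)" and u: "u \<in> {1..N}" and m: "m \<in> V \<rightarrow>\<^sub>E {1..N}" "m [] = u"
      "\<forall>q\<in>L. m q = fmu k j l q" using T_iff by (cases um) auto
    have p0: "psi (u, m) [0] = u" using rV m(2) unfolding psi_def by auto
    have "restrict (\<lambda>q. psi (u, m) (0#q)) V = m"
    proof
      fix q show "restrict (\<lambda>q. psi (u, m) (0#q)) V q = m q"
        using m(1) unfolding psi_def by (auto simp: PiE_def extensional_def)
    qed
    then show "phi (psi um) = um" unfolding um phi_def using p0 by simp
    have "psi (u, m) \<in> insert [] ((Cons 0) ` V \<union> W) \<rightarrow>\<^sub>E {1..N}"
      using m(1) i l unfolding psi_def by (auto simp: PiE_def extensional_def Pi_iff)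
    moreover have "psi (u, m) [] = i" unfolding psi_def by simp
    moreover have "\<forall>q\<in>L. psi (u, m) (0#q) = fmu k j l q" using m(3) LV unfolding psi_def by auto
    moreover have "\<forall>p\<in>W. psi (u, m) p = l" using W0 unfolding psi_def by force
    ultimately show "psi um \<in> S" unfolding um using S_iff by blast
  qed
  also have "sum h T = (\<Sum>u\<in>{1..N}. \<Sum>m\<in>AS N d k u j l. h (u, m))"
    unfolding T_def using sum.Sigma[of "{1..N}" "\<lambda>u. AS N d k u j l" "\<lambda>u m. h (u,m)"] by (simp add: finite_AS)
  also have "\<dots> = (\<Sum>u\<in>{1..N}. a i u * a i l ^ (d - 1) * Z a N d k u j l)"
    unfolding h_def Z_def by (simp add: sum_distrib_left)
  finally show ?thesis unfolding Z_def S_def .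
qed


lemma pow_mat_Suc_left:
  assumes A: "(A :: 'a :: semiring_1 mat) \<in> carrier_mat N N"
  shows "A ^\<^sub>m Suc k = A * A ^\<^sub>m k"
proof (induction k)
  case 0 then show ?case using A by simp
next
  case (Suc k)
  have "A ^\<^sub>m Suc (Suc k) = (A * A ^\<^sub>m k) * A" using Suc by simp
  also have "\<dots> = A * (A ^\<^sub>m k * A)" using A by (intro assoc_mult_mat) auto
  finally show ?case by simp
qed

lemma sum_shift1: "(\<Sum>u\<in>{1..N}. f u) = (\<Sum>x\<in>{0..<N}. f (Suc x))"
proof -
  have "{1..N} = {Suc 0..<Suc N}" by auto
  then show ?thesis by (simp only: sum.shift_bounds_Suc_ivl)
qed

lemma Z_mat:
  fixes a :: "nat \<Rightarrow> nat \<Rightarrow> 'a::comm_ring_1"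
  assumes i: "i \<in> {1..N}" and j: "j \<in> {1..N}" and l: "l \<in> {1..N}"
  shows "Z a N d k i j l = (mat N N (\<lambda>(u, v). a (u + 1) (v + 1) * a (u + 1) l ^ (d - 1)) ^\<^sub>m k) $$ (i - 1, j - 1)"
  using i
proof (induction k arbitrary: i)
  case 0
  then show ?case using j by (auto simp: Z0)
next
  case (Suc k)
  define B where "B = mat N N (\<lambda>(u, v). a (u + 1) (v + 1) * a (u + 1) l ^ (d - 1))"
  have B: "B \<in> carrier_mat N N" unfolding B_def by simp
  have "(B ^\<^sub>m Suc k) $$ (i - 1, j - 1) = (B * B ^\<^sub>m k) $$ (i - 1, j - 1)"
    using pow_mat_Suc_left[OF B] by simp
  also have "\<dots> = (\<Sum>x\<in>{0..<N}. B $$ (i - 1, x) * (B ^\<^sub>m k) $$ (x, j - 1))"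
  proof -
    have d: "dim_row B = N" "dim_col (B ^\<^sub>m k) = N" "dim_row (B ^\<^sub>m k) = N" "dim_col B = N"
      using B by auto
    have "(B * B ^\<^sub>m k) $$ (i - 1, j - 1) = row B (i - 1) \<bullet> col (B ^\<^sub>m k) (j - 1)"
      using Suc.prems j d by (intro index_mult_mat(1)) auto
    also have "\<dots> = (\<Sum>x\<in>{0..<N}. B $$ (i - 1, x) * (B ^\<^sub>m k) $$ (x, j - 1))"
      unfolding scalar_prod_def using Suc.prems j d by (intro sum.cong) auto
    finally show ?thesis .
  qed
  also have "\<dots> = (\<Sum>x\<in>{0..<N}. a i (Suc x) * a i l ^ (d - 1) * Z a N d k (Suc x) j l)"
    using Suc.prems by (intro sum.cong) (auto simp: B_def Suc.IH)
  also have "\<dots> = Z a N d (Suc k) i j l"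
    using ZSuc[OF Suc.prems l, of a d k j] sum_shift1[of "\<lambda>u. a i u * a i l ^ (d - 1) * Z a N d k u j l" N]
    by simp
  finally show ?case unfolding B_def by simp
qed

theorem mainTheorem3:
  fixes a :: "nat \<Rightarrow> nat \<Rightarrow> 'a::comm_ring_1"
    and d n i j l :: nat
  assumes "d \<ge> 1" and "n \<ge> 1"
    and "i \<in> {1..n}" and "j \<in> {1..n}" and "l \<in> {1..n}"
  shows "zval a n (fern d n) (fern_mu n i j l) =
    (mat n n (\<lambda>(u, v). a (u + 1) (v + 1) * a (u + 1) l ^ (d - 1)) ^\<^sub>m n) $$ (i - 1, j - 1)"
proof -
  obtain k where k: "n = Suc k" using assms(2) by (cases n) auto
  have nl: "[] \<notin> leaves (fern d n)" unfolding k leaves_fern_Suc by blast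
  have eq: "(\<forall>p \<in> root_leaves (fern d n). lam p = fern_mu n i j l p) \<longleftrightarrow>
      (lam [] = i \<and> (\<forall>p\<in>leaves (fern d n). lam p = fmu n j l p))" for lam :: "nat list \<Rightarrow> nat"
  proof -
    have "\<forall>p\<in>leaves (fern d n). fern_mu n i j l p = fmu n j l p"
      using nl unfolding fern_mu_def fmu_def by auto
    then show ?thesis unfolding root_leaves_def by (auto simp: fern_mu_def)
  qed
  have "{lam \<in> labelings n (fern d n). \<forall>p \<in> root_leaves (fern d n). lam p = fern_mu n i j l p}
      = AS n d n i j l"
    unfolding AS_def eq ..
  then have "zval a n (fern d n) (fern_mu n i j l) = Z a n d n i j l"
    unfolding zval_def Z_def by simp
  then show ?thesis using Z_mat[OF assms(3-5)] by simp
qed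

end
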